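(* Fix integers $t\geq 1$ and $r\geq 1$. Then, as $m\to\infty$ (with $m\geq r$), \[ R_t(r,m) \leq \left(1-\frac{1}{2^t}\right)2^m-\frac{\sqrt{2^t-1}}{2^t} (1+\sqrt{2})^{r-1}2^{m/2}+O(m^{r-2}), \] where the constant in the $O(\cdot)$ term may depend on $r$ and $t$.
   Context: For a $t\times n$ matrix $\mathbf{v}$ over $\mathbb{F}_q$ with rows $\overline{v}_1,\dots,\overline{v}_t$, its $t$-weight is $\mathrm{wt}^{(t)}(\mathbf{v})=\left|\bigcup_{i=1}^t \mathrm{supp}(\overline{v}_i)\right|$, and $d^{(t)}(\mathbf{u},\mathbf{v})=\mathrm{wt}^{(t)}(\mathbf{u}-\mathbf{v})$. For a linear code $C\subseteq\mathbb{F}_q^n$ and $t\in\mathbb{N}$, let $C^t$ be the set of $t\times n$ matrices all of whose rows lie in $C$. The $t$-th generalized covering radius $R_t(C)$ is the smallest integer $\rho$ such that for every $\mathbf{v}\in\mathbb{F}_q^{t\times n}$ there is $\mathbf{c}\in C^t$ with $d^{(t)}(\mathbf{v},\mathbf{c})\leq \rho$. Binary Reed–Muller codes $\mathrm{RM}(r,m)\subseteq\mathbb{F}_2^{2^m}$ ($0\le r\le m$) are defined recursively: $\mathrm{RM}(0,m)=\{\overline{0},\overline{1}\}$ (the repetition code of length $2^m$), $\mathrm{RM}(m,m)=\mathbb{F}_2^{2^m}$, and for $1\leq r\leq m-1$, $\mathrm{RM}(r,m)=\{(\overline{u},\overline{u}+\overline{v}) : \overline{u}\in \mathrm{RM}(r,m-1),\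 \overline{v}\in\mathrm{RM}(r-1,m-1)\}$. It is a linear code of length $2^m$ and dimension $\sum_{i=0}^r\binom{m}{i}$. Write $R_t(r,m)=R_t(\mathrm{RM}(r,m))$. *)

theory Defs
  imports Complex_Main
begin

text \<open>Binary vectors of length n are bool lists of length n (True = 1, False = 0);
  addition in F_2 is exclusive or, i.e. (\<noteq>) on bool.
  A t x n matrix is a list of t rows, each of length n.\<close>

fun RM :: "nat \<Rightarrow> nat \<Rightarrow> bool list set" where
  "RM 0 m = {replicate (2^m) False, replicate (2^m) True}"
| "RM (Suc r) m =
     (if m \<le> Suc r then {xs. length xs = 2^m}
      else {u @ map2 (\<noteq>) u v | u v. u \<in> RM (Suc r) (m - 1) \<and> v \<in> RM r (m - 1)})"

definition t_dist :: "nat \<Rightarrow> nat \<Rightarrow> bool list list \<Rightarrow> bool list list \<Rightarrow> nat" where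
  "t_dist t n U V = card {j. j < n \<and> (\<exists>i<t. U ! i ! j \<noteq> V ! i ! j)}"

definition is_matrix :: "nat \<Rightarrow> nat \<Rightarrow> bool list list \<Rightarrow> bool" where
  "is_matrix t n V \<longleftrightarrow> length V = t \<and> (\<forall>row\<in>set V. length row = n)"

definition gen_cov_radius :: "nat \<Rightarrow> nat \<Rightarrow> bool list set \<Rightarrow> nat" where
  "gen_cov_radius t n C = (LEAST \<rho>. \<forall>V. is_matrix t n V \<longrightarrow>
      (\<exists>Cm. is_matrix t n Cm \<and> set Cm \<subseteq> C \<and> t_dist t n V Cm \<le> \<rho>))"

definition R_RM :: "nat \<Rightarrow> nat \<Rightarrow> nat \<Rightarrow> nat" where
  "R_RM t r m = gen_cov_radius t (2^m) (RM r m)"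

end

theory Submission
  imports Defs
begin


declare RM.simps(2)[simp del]

lemma RM_full: "m \<le> Suc r \<Longrightarrow> RM (Suc r) m = {xs. length xs = 2^m}"
  by (simp add: RM.simps(2))

lemma RM_rec: "\<not> m \<le> Suc r \<Longrightarrow> RM (Suc r) m =
  {u @ map2 (\<noteq>) u v | u v. u \<in> RM (Suc r) (m - 1) \<and> v \<in> RM r (m - 1)}"
  by (simp add: RM.simps(2))

lemma pow2: "\<not> m \<le> Suc r \<Longrightarrow> (2::nat)^(m-1) + 2^(m-1) = 2^m"
  by (cases m) auto

lemma RM_len: "c \<in> RM r m \<Longrightarrow> length c = 2^m"
proof (induct r m arbitrary: c rule: RM.induct)
  case (1 m) then show ?case by auto
next
  case (2 r m)
  show ?case
  proof (cases "m \<le> Suc r")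
    case True then show ?thesis using 2 by (simp add: RM_full)
  next
    case False
    then obtain u v where c: "c = u @ map2 (\<noteq>) u v" and u: "u \<in> RM (Suc r) (m-1)" and v: "v \<in> RM r (m-1)"
      using 2(3) RM_rec[OF False] by auto
    have "length u = 2^(m-1)" "length v = 2^(m-1)" using 2(1)[OF False u] 2(2)[OF False v] by auto
    moreover have "(2::nat)^(m-1) + 2^(m-1) = 2^m" using pow2[OF False] .
    ultimately show ?thesis using c by simp
  qed
qed

lemma RM_ne: "replicate (2^m) False \<in> RM r m"
proof (induct r m rule: RM.induct)
  case (1 m) then show ?case by auto
next
  case (2 r m)
  show ?case
  proof (cases "m \<le> Suc r")
    case True then show ?thesis by (simp add: RM_full)
  next
    case False
    have e: "(2::nat)^m = 2^(m-1) + 2^(m-1)" using pow2[OF False] by simp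
    have "replicate (2^m) False = replicate (2^(m-1)) False @ map2 (\<noteq>) (replicate (2^(m-1)) False) (replicate (2^(m-1)) False)"
      by (simp add: e replicate_add zip_replicate)
    then show ?thesis using False 2 RM_rec[OF False] by blast
  qed
qed

lemma cov_le:
  assumes "\<forall>V. is_matrix t n V \<longrightarrow> (\<exists>Cm. is_matrix t n Cm \<and> set Cm \<subseteq> C \<and> t_dist t n V Cm \<le> \<rho>)"
  shows "gen_cov_radius t n C \<le> \<rho>"
  unfolding gen_cov_radius_def using assms by (rule Least_le)

lemma t_dist_le: "t_dist t n V Cm \<le> n"
proof -
  have "{j. j < n \<and> (\<exists>i<t. V ! i ! j \<noteq> Cm ! i ! j)} \<subseteq> {..<n}" by auto
  then have "card {j. j < n \<and> (\<exists>i<t. V ! i ! j \<noteq> Cm ! i ! j)} \<le> card {..<n}"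
    by (intro card_mono) auto
  then show ?thesis unfolding t_dist_def by simp
qed

lemma cov_exists:
  assumes "c0 \<in> C" "\<forall>c\<in>C. length c = n" "is_matrix t n V"
  shows "\<exists>Cm. is_matrix t n Cm \<and> set Cm \<subseteq> C \<and> t_dist t n V Cm \<le> gen_cov_radius t n C"
proof -
  let ?P = "\<lambda>\<rho>. \<forall>V. is_matrix t n V \<longrightarrow> (\<exists>Cm. is_matrix t n Cm \<and> set Cm \<subseteq> C \<and> t_dist t n V Cm \<le> \<rho>)"
  have "?P n"
  proof (intro allI impI)
    fix V assume "is_matrix t n V"
    show "\<exists>Cm. is_matrix t n Cm \<and> set Cm \<subseteq> C \<and> t_dist t n V Cm \<le> n"
      by (rule exI[of _ "replicate t c0"]) (use assms t_dist_le in \<open>auto simp: is_matrix_def\<close>)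
  qed
  then have "?P (gen_cov_radius t n C)" unfolding gen_cov_radius_def by (rule LeastI)
  then show ?thesis using assms(3) by blast
qed

lemma R_rec:
  assumes "m \<ge> Suc r"
  shows "R_RM t (Suc r) (Suc m) \<le> R_RM t (Suc r) m + R_RM t r m"
proof -
  let ?h = "(2::nat)^m"
  let ?R1 = "R_RM t (Suc r) m" and ?R2 = "R_RM t r m"
  have hn: "(2::nat)^Suc m = ?h + ?h" by simp
  have RMeq: "RM (Suc r) (Suc m) = {u @ map2 (\<noteq>) u v | u v. u \<in> RM (Suc r) m \<and> v \<in> RM r m}"
    using assms RM_rec[of "Suc m" r] by simp
  show ?thesis unfolding R_RM_def[of t "Suc r" "Suc m"]
  proof (rule cov_le, intro allI impI)
    fix V assume V: "is_matrix t (2^Suc m) V"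
    define A where "A = map (take ?h) V"
    have A: "is_matrix t ?h A" using V by (auto simp: is_matrix_def A_def)
    obtain U where U: "is_matrix t ?h U" "set U \<subseteq> RM (Suc r) m" "t_dist t ?h A U \<le> ?R1"
      using cov_exists[OF RM_ne _ A] RM_len unfolding R_RM_def by blast
    define B where "B = map (\<lambda>i. map2 (\<noteq>) (drop ?h (V!i)) (U!i)) [0..<t]"
    have B: "is_matrix t ?h B" using V U(1) by (auto simp: is_matrix_def B_def)
    obtain W where W: "is_matrix t ?h W" "set W \<subseteq> RM r m" "t_dist t ?h B W \<le> ?R2"
      using cov_exists[OF RM_ne _ B] RM_len unfolding R_RM_def by blast
    define Cm where "Cm = map (\<lambda>i. U!i @ map2 (\<noteq>) (U!i) (W!i)) [0..<t]"
    have lenU: "\<And>i. i < t \<Longrightarrow> length (U!i) = ?h" using U(1) by (auto simp: is_matrix_def)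
    have lenW: "\<And>i. i < t \<Longrightarrow> length (W!i) = ?h" using W(1) by (auto simp: is_matrix_def)
    have lenV: "\<And>i. i < t \<Longrightarrow> length (V!i) = ?h + ?h" using V by (auto simp: is_matrix_def)
    have Cm1: "is_matrix t (2^Suc m) Cm" using lenU lenW by (auto simp: is_matrix_def Cm_def)
    have Cm2: "set Cm \<subseteq> RM (Suc r) (Suc m)"
    proof
      fix x assume "x \<in> set Cm"
      then obtain i where i: "i < t" "x = U!i @ map2 (\<noteq>) (U!i) (W!i)" by (auto simp: Cm_def)
      have "U!i \<in> RM (Suc r) m" using U(1,2) i(1) by (auto simp: is_matrix_def)
      moreover have "W!i \<in> RM r m" using W(1,2) i(1) by (auto simp: is_matrix_def)
      ultimately show "x \<in> RM (Suc r) (Suc m)" using i(2) RMeq by blast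
    qed
    let ?D = "{j. j < 2^Suc m \<and> (\<exists>i<t. V ! i ! j \<noteq> Cm ! i ! j)}"
    let ?D1 = "{j. j < ?h \<and> (\<exists>i<t. A ! i ! j \<noteq> U ! i ! j)}"
    let ?D2 = "{j. j < ?h \<and> (\<exists>i<t. B ! i ! j \<noteq> W ! i ! j)}"
    have sub: "?D \<subseteq> ?D1 \<union> (\<lambda>j. j + ?h) ` ?D2"
    proof
      fix j assume "j \<in> ?D"
      then obtain i where j: "j < ?h + ?h" "i < t" "V!i!j \<noteq> Cm!i!j" by auto
      show "j \<in> ?D1 \<union> (\<lambda>j. j + ?h) ` ?D2"
      proof (cases "j < ?h")
        case True
        then have "A!i!j \<noteq> U!i!j" using j lenU[OF j(2)] lenV[OF j(2)] V
          by (auto simp: A_def Cm_def nth_append is_matrix_def)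
        then show ?thesis using True j(2) by blast
      next
        case False
        define j' where "j' = j - ?h"
        have jj: "j = j' + ?h" "j' < ?h" using False j(1) by (auto simp: j'_def)
        have "B!i!j' \<noteq> W!i!j'" using j jj(2) add.commute[of j' ?h] jj(1) lenU[OF j(2)] lenV[OF j(2)] lenW[OF j(2)] V
          by (auto simp: B_def Cm_def nth_append is_matrix_def)
        then have "j' \<in> ?D2" using jj(2) j(2) by blast
        then show ?thesis using jj(1) by blast
      qed
    qed
    have "t_dist t (2^Suc m) V Cm = card ?D" by (simp add: t_dist_def)
    also have "\<dots> \<le> card (?D1 \<union> (\<lambda>j. j + ?h) ` ?D2)" by (rule card_mono[OF _ sub]) auto
    also have "\<dots> \<le> card ?D1 + card ((\<lambda>j. j + ?h) ` ?D2)" by (rule card_Un_le)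
    also have "\<dots> \<le> card ?D1 + card ?D2" using card_image_le[of ?D2 "\<lambda>j. j + ?h"] by auto
    also have "\<dots> \<le> ?R1 + ?R2" using U(3) W(3) by (simp add: t_dist_def)
    finally show "\<exists>Cm. is_matrix t (2 ^ Suc m) Cm \<and> set Cm \<subseteq> RM (Suc r) (Suc m) \<and>
                 t_dist t (2 ^ Suc m) V Cm \<le> ?R1 + ?R2" using Cm1 Cm2 by blast
  qed
qed



fun A1 :: "nat \<Rightarrow> bool list set" where
  "A1 0 = {[False], [True]}"
| "A1 (Suc m) = (\<lambda>u. u @ u) ` A1 m \<union> (\<lambda>u. u @ map Not u) ` A1 m"

lemma A1_len: "c \<in> A1 m \<Longrightarrow> length c = 2^m"
  by (induct m arbitrary: c) auto

lemma A1_fin: "finite (A1 m)"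
  by (induct m) auto

lemma A1_not: "c \<in> A1 m \<Longrightarrow> map Not c \<in> A1 m"
proof (induct m arbitrary: c)
  case 0 then show ?case by auto
next
  case (Suc m)
  then consider u where "u \<in> A1 m" "c = u @ u" | u where "u \<in> A1 m" "c = u @ map Not u" by auto
  then show ?case
  proof cases
    case 1 then show ?thesis using Suc(1)[OF 1(1)] by auto
  next
    case 2
    have nn: "map Not (map Not u) = u" by (induct u) auto
    have "map Not c = map Not u @ map Not (map Not u)" using 2 nn by simp
    then have "map Not c \<in> (\<lambda>u. u @ map Not u) ` A1 m"
      using Suc(1)[OF 2(1)] by blast
    then show ?thesis by simp
  qed
qed

lemma map2_F: "length v = length u \<Longrightarrow> (\<forall>x\<in>set v. \<not> x) \<Longrightarrow> map2 (\<noteq>) u v = u"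
  by (induct u arbitrary: v) (auto simp: length_Suc_conv)

lemma map2_T: "length v = length u \<Longrightarrow> (\<forall>x\<in>set v. x) \<Longrightarrow> map2 (\<noteq>) u v = map Not u"
  by (induct u arbitrary: v) (auto simp: length_Suc_conv)

lemma RM1_A1: "RM (Suc 0) m = A1 m"
proof (induct m)
  case 0
  have "{xs :: bool list. length xs = 1} = {[False],[True]}"
    by (auto simp: length_Suc_conv)
  then show ?case by (simp add: RM_full)
next
  case (Suc m)
  show ?case
  proof (cases m)
    case 0
    have "{xs :: bool list. length xs = 2} = {[False,False],[True,True],[False,True],[True,False]}"
      by (auto simp: length_Suc_conv numeral_2_eq_2)
    then show ?thesis using 0 by (simp add: RM_full insert_commute)
  next
    case (Suc k)
    have nle: "\<not> Suc m \<le> Suc 0" using Suc by simp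
    have R: "RM (Suc 0) (Suc m) = {u @ map2 (\<noteq>) u v | u v. u \<in> A1 m \<and> v \<in> RM 0 m}"
      using RM_rec[OF nle] \<open>RM (Suc 0) m = A1 m\<close> by simp
    show ?thesis
    proof
      show "RM (Suc 0) (Suc m) \<subseteq> A1 (Suc m)"
      proof
        fix c assume "c \<in> RM (Suc 0) (Suc m)"
        then obtain u v where c: "c = u @ map2 (\<noteq>) u v" "u \<in> A1 m" "v \<in> RM 0 m" using R by auto
        have lu: "length u = 2^m" using A1_len[OF c(2)] .
        from c(3) have "v = replicate (2^m) False \<or> v = replicate (2^m) True" by simp
        then show "c \<in> A1 (Suc m)"
        proof
          assume "v = replicate (2^m) False"
          then have "map2 (\<noteq>) u v = u" using lu by (intro map2_F) auto
          then show ?thesis using c by auto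
        next
          assume "v = replicate (2^m) True"
          then have "map2 (\<noteq>) u v = map Not u" using lu by (intro map2_T) auto
          then show ?thesis using c by auto
        qed
      qed
    next
      show "A1 (Suc m) \<subseteq> RM (Suc 0) (Suc m)"
      proof
        fix c assume "c \<in> A1 (Suc m)"
        then consider u where "u \<in> A1 m" "c = u @ u" | u where "u \<in> A1 m" "c = u @ map Not u" by auto
        then show "c \<in> RM (Suc 0) (Suc m)"
        proof cases
          case 1
          have lu: "length u = 2^m" using A1_len[OF 1(1)] .
          have "map2 (\<noteq>) u (replicate (2^m) False) = u" using lu by (intro map2_F) auto
          moreover have "replicate (2^m) False \<in> RM 0 m" by simp
          ultimately show ?thesis unfolding R
            by (intro CollectI exI[of _ u] exI[of _ "replicate (2^m) False"]) (use 1 in auto)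
        next
          case 2
          have lu: "length u = 2^m" using A1_len[OF 2(1)] .
          have "map2 (\<noteq>) u (replicate (2^m) True) = map Not u" using lu by (intro map2_T) auto
          moreover have "replicate (2^m) True \<in> RM 0 m" by simp
          ultimately show ?thesis unfolding R
            by (intro CollectI exI[of _ u] exI[of _ "replicate (2^m) True"]) (use 2 in auto)
        qed
      qed
    qed
  qed
qed

definition e :: "bool \<Rightarrow> int" where "e b = (if b then -1 else 1)"

lemma e_sq[simp]: "e b * e b = 1" by (simp add: e_def)
lemma e_not[simp]: "e (\<not> b) = - e b" by (simp add: e_def)

lemma app_lo: "length u = n \<Longrightarrow> x < n \<Longrightarrow> (u @ w) ! x = u ! x"
  by (simp add: nth_append)

lemma app_hi: "length u = n \<Longrightarrow> \<not> x < n \<Longrightarrow> (u @ w) ! x = w ! (x - n)"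
  by (simp add: nth_append)

lemma A1_orth:
  assumes "x < 2^m" "y < 2^m" "x \<noteq> y"
  shows "(\<Sum>c\<in>A1 m. e (c!x) * e (c!y)) = 0"
  using assms
proof (induct m arbitrary: x y)
  case 0 then show ?case by simp
next
  case (Suc m)
  let ?f = "\<lambda>c. e (c!x) * e (c!y)"
  have inj1: "inj_on (\<lambda>u. u @ u) (A1 m)"
  proof (rule inj_onI)
    fix u w assume "u \<in> A1 m" "w \<in> A1 m" "u @ u = w @ w"
    moreover have "length u = length w" using calculation by (simp add: A1_len)
    ultimately show "u = w" by (metis append_eq_append_conv)
  qed
  have inj2: "inj_on (\<lambda>u. u @ map Not u) (A1 m)"
  proof (rule inj_onI)
    fix u w assume "u \<in> A1 m" "w \<in> A1 m" "u @ map Not u = w @ map Not w"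
    moreover have "length u = length w" using calculation by (simp add: A1_len)
    ultimately show "u = w" by (metis append_eq_append_conv)
  qed
  have disj: "(\<lambda>u. u @ u) ` A1 m \<inter> (\<lambda>u. u @ map Not u) ` A1 m = {}"
  proof (rule ccontr)
    assume "\<not> ?thesis"
    then obtain u w where uw: "u \<in> A1 m" "w \<in> A1 m" "u @ u = w @ map Not w" by auto
    have "length u = length w" using uw by (simp add: A1_len)
    then have "u = w \<and> u = map Not w" using uw(3) append_eq_append_conv[of u w u "map Not w"] by blast
    then have ww: "w = map Not w" by metis
    moreover have "w \<noteq> []" using A1_len[OF uw(2)] by auto
    ultimately show False by (cases w) auto
  qed
  have "(\<Sum>c\<in>A1 (Suc m). ?f c) = (\<Sum>c\<in>(\<lambda>u. u @ u) ` A1 m. ?f c) + (\<Sum>c\<in>(\<lambda>u. u @ map Not u) ` A1 m. ?f c)"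
    by (simp add: sum.union_disjoint[OF _ _ disj] A1_fin)
  also have "\<dots> = (\<Sum>u\<in>A1 m. ?f (u @ u) + ?f (u @ map Not u))"
    by (simp add: sum.reindex[OF inj1] sum.reindex[OF inj2] sum.distrib)
  also have "\<dots> = 0"
  proof (cases "x < 2^m")
    case xl: True
    show ?thesis
    proof (cases "y < 2^m")
      case True
      have "(\<Sum>u\<in>A1 m. ?f (u @ u) + ?f (u @ map Not u)) = (\<Sum>u\<in>A1 m. 2 * (e (u!x) * e (u!y)))"
        by (rule sum.cong) (simp_all add: app_lo[OF A1_len] xl True)
      also have "\<dots> = 2 * (\<Sum>u\<in>A1 m. e (u!x) * e (u!y))" by (simp add: sum_distrib_left)
      also have "\<dots> = 0" using Suc xl True by simp
      finally show ?thesis .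
    next
      case False
      have yb: "y - 2^m < 2^m" using Suc.prems by simp
      show ?thesis
        by (rule sum.neutral) (simp add: app_lo[OF A1_len] app_hi[OF A1_len] xl False A1_len yb)
    qed
  next
    case xl: False
    show ?thesis
    proof (cases "y < 2^m")
      case True
      have xb: "x - 2^m < 2^m" using Suc.prems by simp
      show ?thesis
        by (rule sum.neutral) (simp add: app_lo[OF A1_len] app_hi[OF A1_len] xl True A1_len xb)
    next
      case False
      have xy: "x - 2^m < 2^m" "y - 2^m < 2^m" "x - 2^m \<noteq> y - 2^m" using Suc.prems xl False by auto
      have "(\<Sum>u\<in>A1 m. ?f (u @ u) + ?f (u @ map Not u)) = (\<Sum>u\<in>A1 m. 2 * (e (u!(x - 2^m)) * e (u!(y-2^m))))"
        by (rule sum.cong) (simp_all add: app_hi[OF A1_len] xl False A1_len xy)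
      also have "\<dots> = 2 * (\<Sum>u\<in>A1 m. e (u!(x-2^m)) * e (u!(y-2^m)))" by (simp add: sum_distrib_left)
      also have "\<dots> = 0" using Suc.hyps xy by simp
      finally show ?thesis .
    qed
  qed
  finally show ?case .
qed



lemma A1_ne: "A1 m \<noteq> {}"
  by (induct m) auto

lemma key:
  assumes S: "S \<subseteq> {..<2^m}"
  shows "\<exists>c\<in>A1 m. real (card S) + sqrt (real (card S)) \<le> 2 * real (card {x\<in>S. v!x = c!x})"
proof -
  have finS: "finite S" using S finite_subset by blast
  define D where "D c = (\<Sum>x\<in>S. e (v!x) * e (c!x))" for c
  have inner: "(\<Sum>c\<in>A1 m. e (v!x) * e (c!x) * (e (v!y) * e (c!y))) = (if x = y then int (card (A1 m)) else 0)"
    if xy: "x \<in> S" "y \<in> S" for x y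
  proof (cases "x = y")
    case True
    have "\<And>c. e (v!x) * e (c!x) * (e (v!x) * e (c!x)) = 1"
      by (simp add: e_def)
    then show ?thesis using True by simp
  next
    case False
    have "(\<Sum>c\<in>A1 m. e (v!x) * e (c!x) * (e (v!y) * e (c!y))) = (e (v!x) * e (v!y)) * (\<Sum>c\<in>A1 m. e (c!x) * e (c!y))"
      by (simp add: sum_distrib_left mult_ac)
    also have "\<dots> = 0" using A1_orth[of x m y] False xy S by auto
    finally show ?thesis using False by simp
  qed
  have sq: "(\<Sum>c\<in>A1 m. (D c)^2) = int (card (A1 m)) * int (card S)"
  proof -
    have "(\<Sum>c\<in>A1 m. (D c)^2) = (\<Sum>c\<in>A1 m. \<Sum>x\<in>S. \<Sum>y\<in>S. e (v!x) * e (c!x) * (e (v!y) * e (c!y)))"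
      by (simp add: D_def power2_eq_square sum_product)
    also have "\<dots> = (\<Sum>x\<in>S. \<Sum>c\<in>A1 m. \<Sum>y\<in>S. e (v!x) * e (c!x) * (e (v!y) * e (c!y)))"
      by (rule sum.swap)
    also have "\<dots> = (\<Sum>x\<in>S. \<Sum>y\<in>S. \<Sum>c\<in>A1 m. e (v!x) * e (c!x) * (e (v!y) * e (c!y)))"
      by (rule sum.cong[OF refl], rule sum.swap)
    also have "\<dots> = (\<Sum>x\<in>S. \<Sum>y\<in>S. (if x = y then int (card (A1 m)) else 0))"
      by (rule sum.cong[OF refl], rule sum.cong[OF refl], rule inner) auto
    also have "\<dots> = (\<Sum>x\<in>S. int (card (A1 m)))"
      using finS by (simp add: sum.delta)
    finally show ?thesis by (simp add: mult.commute)
  qed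
  have "\<exists>c\<in>A1 m. int (card S) \<le> (D c)^2"
  proof (rule ccontr)
    assume "\<not> ?thesis"
    then have "\<forall>c\<in>A1 m. (D c)^2 < int (card S)" by auto
    then have "(\<Sum>c\<in>A1 m. (D c)^2) < (\<Sum>c\<in>A1 m. int (card S))"
      by (intro sum_strict_mono A1_fin A1_ne) auto
    then show False using sq by simp
  qed
  then obtain c0 where c0: "c0 \<in> A1 m" "int (card S) \<le> (D c0)^2" by blast
  have Dnot: "D (map Not c0) = - D c0"
  proof -
    have "D (map Not c0) = (\<Sum>x\<in>S. - (e (v!x) * e (c0!x)))"
      unfolding D_def by (rule sum.cong) (use S A1_len[OF c0(1)] in auto)
    then show ?thesis by (simp add: D_def sum_negf)
  qed
  define c where "c = (if D c0 \<ge> 0 then c0 else map Not c0)"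
  have c: "c \<in> A1 m" "D c = \<bar>D c0\<bar>" using c0 A1_not Dnot by (auto simp: c_def)
  have "real_of_int (int (card S)) \<le> real_of_int ((D c0)^2)" using c0(2) by linarith
  then have "real (card S) \<le> (real_of_int (D c))^2" using c(2) by simp
  then have s1: "sqrt (real (card S)) \<le> real_of_int (D c)" using c(2)
    by (metis abs_ge_zero of_int_0_le_iff real_le_lsqrt real_sqrt_le_iff real_sqrt_pow2_iff real_le_rsqrt)
  have "D c = (\<Sum>x\<in>S. 2 * of_bool (v!x = c!x) - 1)"
    unfolding D_def by (rule sum.cong) (auto simp: e_def)
  also have "\<dots> = 2 * int (card {x\<in>S. v!x = c!x}) - int (card S)"
    using finS by (simp add: sum_subtractf sum_distrib_left[symmetric] sum_of_bool_eq Int_def conj_commute)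
  finally have "real_of_int (D c) = 2 * real (card {x\<in>S. v!x = c!x}) - real (card S)"
    by simp
  then show ?thesis using s1 c(1) by (intro bexI[of _ c]) auto
qed



lemma sqrt2m: "sqrt ((2::real)^m) = 2 powr (real m / 2)"
proof -
  have "sqrt ((2::real)^m) = ((2::real)^m) powr (1/2)" by (simp add: powr_half_sqrt)
  also have "\<dots> = (2 powr real m) powr (1/2)" by (simp add: powr_realpow)
  also have "\<dots> = 2 powr (real m / 2)" by (simp add: powr_powr)
  finally show ?thesis .
qed

lemma ineq:
  fixes n u s s' :: real
  assumes n: "n \<ge> 0" and u: "u \<ge> 1" and s: "(n + sqrt ((u - 1) * n)) / u \<le> s"
    and s': "s + sqrt s \<le> 2 * s'"
  shows "(n + sqrt ((2 * u - 1) * n)) / (2 * u) \<le> s'"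
proof -
  have up: "u > 0" using u by simp
  have "n / u \<le> (n + sqrt ((u - 1) * n)) / u" using up u n by (intro divide_right_mono) auto
  then have sn: "n / u \<le> s" using s by linarith
  have "sqrt (n / u) = sqrt (u * n) / u"
  proof -
    have "n / u = (u * n) / (u^2)" using up by (simp add: power2_eq_square)
    then show ?thesis using up by (simp add: real_sqrt_divide)
  qed
  moreover have "sqrt (n / u) \<le> sqrt s" using sn by simp
  ultimately have sq: "sqrt (u * n) / u \<le> sqrt s" by simp
  have "sqrt ((2 * u - 1) * n) = sqrt ((u - 1) * n + u * n)" by (simp add: algebra_simps)
  also have "\<dots> \<le> sqrt ((u - 1) * n) + sqrt (u * n)"
    by (rule sqrt_add_le_add_sqrt) (use u n in auto)
  finally have "(n + sqrt ((2 * u - 1) * n)) / u \<le> (n + sqrt ((u - 1) * n)) / u + sqrt (u * n) / u"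
    using up by (simp add: divide_right_mono add_divide_distrib[symmetric])
  also have "\<dots> \<le> s + sqrt s" using s sq by linarith
  also have "\<dots> \<le> 2 * s'" by (rule s')
  finally have "(n + sqrt ((2 * u - 1) * n)) / u \<le> 2 * s'" .
  then show ?thesis using up by (simp add: field_simps)
qed

lemma greedy:
  assumes V: "is_matrix t (2^m) V" and j: "j \<le> t"
  shows "\<exists>Cs. length Cs = j \<and> set Cs \<subseteq> A1 m \<and>
     (real (2^m) + sqrt ((2^j - 1) * real (2^m))) / 2^j \<le> real (card {x. x < 2^m \<and> (\<forall>i<j. V!i!x = Cs!i!x)})"
  using j
proof (induct j)
  case 0
  show ?case by (intro exI[of _ "[]"]) simp
next
  case (Suc j)
  then obtain Cs where Cs: "length Cs = j" "set Cs \<subseteq> A1 m"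
    "(real (2^m) + sqrt ((2^j - 1) * real (2^m))) / 2^j \<le> real (card {x. x < 2^m \<and> (\<forall>i<j. V!i!x = Cs!i!x)})"
    by auto
  define S where "S = {x. x < 2^m \<and> (\<forall>i<j. V!i!x = Cs!i!x)}"
  have "S \<subseteq> {..<2^m}" by (auto simp: S_def)
  from key[OF this, of "V!j"] obtain c where c: "c \<in> A1 m"
    "real (card S) + sqrt (real (card S)) \<le> 2 * real (card {x\<in>S. V!j!x = c!x})" by blast
  have eq: "{x. x < 2^m \<and> (\<forall>i<Suc j. V!i!x = (Cs @ [c])!i!x)} = {x\<in>S. V!j!x = c!x}"
    using Cs(1) by (auto simp: S_def nth_append less_Suc_eq)
  have "(real (2^m) + sqrt ((2 * 2^j - 1) * real (2^m))) / (2 * 2^j) \<le> real (card {x\<in>S. V!j!x = c!x})"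
    by (rule ineq[OF _ _ Cs(3)[folded S_def] c(2)]) auto
  then show ?case using Cs c eq by (intro exI[of _ "Cs @ [c]"]) auto
qed

lemma floor_aux: "real d \<le> B \<Longrightarrow> d \<le> nat \<lfloor>B\<rfloor>"
proof -
  assume "real d \<le> B"
  then have "of_int (int d) \<le> B" by simp
  then have "int d \<le> \<lfloor>B\<rfloor>" by (simp add: le_floor_iff)
  then show ?thesis by simp
qed

lemma R1_bound:
  "real (R_RM t (Suc 0) m) \<le> (1 - 1 / 2^t) * 2^m - sqrt (2^t - 1) / 2^t * 2 powr (real m / 2)"
proof -
  define B :: real where "B = (1 - 1 / 2^t) * 2^m - sqrt (2^t - 1) / 2^t * 2 powr (real m / 2)"
  have sqf: "sqrt ((2^t - 1) * real (2^m)) = sqrt (2^t-1) * 2 powr (real m / 2)"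
    by (subst real_sqrt_mult) (simp add: sqrt2m)
  have BL0: "B = real (2^m) - (real (2^m) + sqrt (2^t-1) * 2 powr (real m / 2)) / 2^t"
    unfolding B_def by (simp add: field_simps)
  have BL: "B = real (2^m) - (real (2^m) + sqrt ((2^t - 1) * real (2^m))) / 2^t"
    using BL0 sqf by simp
  have main: "\<exists>Cm. is_matrix t (2^m) Cm \<and> set Cm \<subseteq> A1 m \<and> real (t_dist t (2^m) V Cm) \<le> B"
    if V: "is_matrix t (2^m) V" for V
  proof -
    obtain Cs where Cs: "length Cs = t" "set Cs \<subseteq> A1 m"
      "(real (2^m) + sqrt ((2^t - 1) * real (2^m))) / 2^t \<le> real (card {x. x < 2^m \<and> (\<forall>i<t. V!i!x = Cs!i!x)})"
      using greedy[OF V order_refl] by blast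
    let ?S = "{x. x < 2^m \<and> (\<forall>i<t. V!i!x = Cs!i!x)}"
    let ?D = "{j. j < 2^m \<and> (\<exists>i<t. V ! i ! j \<noteq> Cs ! i ! j)}"
    have "?D = {..<2^m} - ?S" by auto
    then have "card ?D = 2^m - card ?S" by (simp add: card_Diff_subset subset_eq)
    moreover have "card ?S \<le> 2^m"
      using card_mono[of "{..<2^m}" ?S] by auto
    ultimately have "real (t_dist t (2^m) V Cs) = real (2^m) - real (card ?S)"
      by (simp add: t_dist_def of_nat_diff)
    then have "real (t_dist t (2^m) V Cs) \<le> B" using Cs(3) BL by linarith
    moreover have "is_matrix t (2^m) Cs" using Cs(1,2) A1_len by (auto simp: is_matrix_def)
    ultimately show ?thesis using Cs(2) by blast
  qed
  have "R_RM t (Suc 0) m \<le> nat \<lfloor>B\<rfloor>"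
    unfolding R_RM_def RM1_A1
    by (rule cov_le) (use main floor_aux in blast)
  moreover have "B \<ge> 0"
  proof -
    have "is_matrix t (2^m) (replicate t (replicate (2^m) False))" by (simp add: is_matrix_def)
    from main[OF this] show ?thesis by auto
  qed
  ultimately show ?thesis unfolding B_def[symmetric] by linarith
qed



definition g :: "nat \<Rightarrow> nat \<Rightarrow> nat \<Rightarrow> real" where
  "g t r m = (1 - 1 / 2^t) * 2^m - sqrt (2^t - 1) / 2^t * (1 + sqrt 2)^(r - 1) * 2 powr (real m / 2)"

lemma pow_suc_half: "(2::real) powr (real (Suc m) / 2) = sqrt 2 * 2 powr (real m / 2)"
proof -
  have e: "real (Suc m) / 2 = real m / 2 + 1/2" by simp
  have "(2::real) powr (real (Suc m) / 2) = 2 powr (real m / 2 + 1/2)" by (simp only: e)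
  also have "\<dots> = 2 powr (real m / 2) * 2 powr (1/2)" by (rule powr_add)
  also have "\<dots> = sqrt 2 * 2 powr (real m / 2)" by (simp add: powr_half_sqrt)
  finally show ?thesis .
qed

lemma g_rec: "g t (Suc (Suc q)) (Suc m) = g t (Suc (Suc q)) m + g t (Suc q) m"
proof -
  define P where "P = (1 + sqrt 2)^q"
  define Q where "Q = (2::real) powr (real m / 2)"
  define c where "c = sqrt (2^t - 1) / (2::real)^t"
  have s2: "sqrt 2 * sqrt 2 = (2::real)" by simp
  have "(1 + sqrt 2) * P * (sqrt 2 * Q) = (1 + sqrt 2) * P * Q + P * Q"
    using s2 by (simp add: algebra_simps)
  then have "c * ((1 + sqrt 2) * P) * (sqrt 2 * Q) = c * ((1 + sqrt 2) * P) * Q + c * P * Q"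
    by (metis (no_types, lifting) distrib_left mult.assoc)
  moreover have e1: "(1+sqrt 2)^(Suc (Suc q) - 1) = (1+sqrt 2)*P" by (simp add: P_def)
  moreover have e2: "(1+sqrt 2)^(Suc q - 1) = P" by (simp add: P_def)
  moreover have X: "(1-1/2^t)*(2::real)^Suc m = (1-1/2^t)*2^m + (1-1/2^t)*2^m" by simp
  ultimately show ?thesis
    unfolding g_def pow_suc_half e1 e2 Q_def[symmetric] c_def[symmetric] by linarith
qed

lemma R1_g: "real (R_RM t (Suc 0) m) \<le> g t (Suc 0) m"
  using R1_bound unfolding g_def by simp

lemma Rbound: "\<exists>K\<ge>0. \<forall>m\<ge>Suc (Suc q). real (R_RM t (Suc (Suc q)) m) \<le> g t (Suc (Suc q)) m + K * real m ^ q"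
proof (induct q)
  case 0
  define K where "K = max 0 (real (R_RM t 2 2) - g t 2 2)"
  have "real (R_RM t 2 m) \<le> g t 2 m + K" if "m \<ge> 2" for m
    using that
  proof (induct m rule: dec_induct)
    case base then show ?case by (simp add: K_def)
  next
    case (step m)
    have "R_RM t (Suc (Suc 0)) (Suc m) \<le> R_RM t (Suc (Suc 0)) m + R_RM t (Suc 0) m"
      by (rule R_rec) (use step in simp)
    then have "real (R_RM t 2 (Suc m)) \<le> real (R_RM t 2 m) + real (R_RM t (Suc 0) m)"
      by (simp add: numeral_2_eq_2)
    also have "\<dots> \<le> g t 2 m + K + g t (Suc 0) m" using step(3) R1_g[of t m] by linarith
    also have "\<dots> = g t 2 (Suc m) + K" using g_rec[of t 0 m] by (simp add: numeral_2_eq_2)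
    finally show ?case .
  qed
  then show ?case by (intro exI[of _ K]) (auto simp: K_def numeral_2_eq_2)
next
  case (Suc q)
  then obtain K where K: "K \<ge> 0" "\<And>m. m \<ge> Suc (Suc q) \<Longrightarrow> real (R_RM t (Suc (Suc q)) m) \<le> g t (Suc (Suc q)) m + K * real m ^ q"
    by blast
  let ?r = "Suc (Suc (Suc q))"
  define A where "A = max K \<bar>real (R_RM t ?r ?r) - g t ?r ?r\<bar>"
  have A0: "A \<ge> 0" "A \<ge> K" using K(1) by (auto simp: A_def)
  have "real (R_RM t ?r m) \<le> g t ?r m + A * real m ^ Suc q" if "m \<ge> ?r" for m
    using that
  proof (induct m rule: dec_induct)
    case base
    have "1 \<le> real ?r ^ Suc q" by (intro one_le_power) simp
    then have "A \<le> A * real ?r ^ Suc q" using A0 by (simp add: mult_le_cancel_left1)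
    moreover have "real (R_RM t ?r ?r) - g t ?r ?r \<le> A" by (simp add: A_def)
    ultimately show ?case by linarith
  next
    case (step m)
    have "R_RM t ?r (Suc m) \<le> R_RM t ?r m + R_RM t (Suc (Suc q)) m"
      by (rule R_rec) (use step in simp)
    then have "real (R_RM t ?r (Suc m)) \<le> real (R_RM t ?r m) + real (R_RM t (Suc (Suc q)) m)"
      by simp
    also have "\<dots> \<le> g t ?r m + A * real m ^ Suc q + (g t (Suc (Suc q)) m + K * real m ^ q)"
      using step(3) K(2)[of m] step(1) by simp
    also have "\<dots> \<le> g t ?r m + g t (Suc (Suc q)) m + A * (real m ^ Suc q + real m ^ q)"
    proof -
      have "K * real m ^ q \<le> A * real m ^ q" using A0 by (simp add: mult_right_mono)
      then show ?thesis by (simp add: algebra_simps)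
    qed
    also have "\<dots> \<le> g t ?r (Suc m) + A * real (Suc m) ^ Suc q"
    proof -
      have "real m ^ q \<le> real (Suc m) ^ q" by (intro power_mono) auto
      then have "(real m + 1) * real m ^ q \<le> (real m + 1) * real (Suc m) ^ q" by (intro mult_left_mono) auto
      then have "real m ^ Suc q + real m ^ q \<le> real (Suc m) ^ Suc q" by (simp add: algebra_simps)
      then have "A * (real m ^ Suc q + real m ^ q) \<le> A * real (Suc m) ^ Suc q" using A0 by (simp add: mult_left_mono)
      moreover have "g t ?r (Suc m) = g t ?r m + g t (Suc (Suc q)) m" by (rule g_rec)
      ultimately show ?thesis by linarith
    qed
    finally show ?case .
  qed
  then show ?case using A0 by blast
qed

theorem theorem11:
  fixes t r :: nat
  assumes "t \<ge> 1" and "r \<ge> 1"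
  shows "\<exists>K::real. \<exists>M::nat. \<forall>m\<ge>M. m \<ge> r \<longrightarrow>
    real (R_RM t r m) \<le> (1 - 1 / 2^t) * 2^m
       - sqrt (2^t - 1) / 2^t * (1 + sqrt 2)^(r - 1) * 2 powr (real m / 2)
       + K * real m powr (real r - 2)"
proof (cases "r = 1")
  case True
  show ?thesis
    by (intro exI[of _ 0] exI[of _ 0]) (use R1_bound True in simp)
next
  case False
  define q where "q = r - 2"
  have q: "r = Suc (Suc q)" using assms(2) False unfolding q_def by simp
  obtain K where K: "K \<ge> 0" "\<And>m. m \<ge> Suc (Suc q) \<Longrightarrow> real (R_RM t (Suc (Suc q)) m) \<le> g t (Suc (Suc q)) m + K * real m ^ q"
    using Rbound[of q t] by blast
  show ?thesis
  proof (intro exI[of _ K] exI[of _ 0] allI impI)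
    fix m :: nat assume "m \<ge> 0" "m \<ge> r"
    then have m: "m \<ge> Suc (Suc q)" using q by simp
    have "real m powr (real r - 2) = real m ^ q"
      using m q by (simp add: powr_realpow)
    then show "real (R_RM t r m) \<le> (1 - 1 / 2^t) * 2^m
       - sqrt (2^t - 1) / 2^t * (1 + sqrt 2)^(r - 1) * 2 powr (real m / 2)
       + K * real m powr (real r - 2)"
      using K(2)[OF m] q unfolding g_def by simp
  qed
qed

end
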